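(* Let $P$ satisfy (S1)–(S4). Let $h_1,h_2,h_3\in P\setminus\{1\}$ and let $\bar h=(h_1)_1(h_2)_2(h_3)_3\in H$ be the element with $h_j$ at coordinate $j$ ($j=1,2,3$) and $1$ elsewhere. Then $\bar h$ is a $[\pm,t]$-commutator if and only if $\Xi(h_1,h_2,h_3)$ holds in $P$.
   Context: Conditions (S1)–(S4) on a finite group $P$: (S1) for all $a_1,a_2\in P$ there are $x,y$ with $a_2=x^{-1}a_1^{-1}yxy^{-1}$; (S2) for all $a_1,a_2,a_3$ there are $u,v$ with $a_2=a_3ua_1^{-1}a_3^{-1}vu^{-1}v^{-1}$; (S3) for all $u_1,u_2,u_3,u_4\ne1$ there are $x,y,z$ with $u_4=x^{-1}u_1xy^{-1}u_2yz^{-1}u_3z$; (S4) there are $u_1,u_2,u_3\ne1$ with $\Xi(u_1,u_2,u_3)$ false. Here $\Xi(u_1,u_2,u_3)$ means: $\exists x,y\in P\ (u_3=x^{-1}u_2^{-1}xy^{-1}u_1^{-1}y)$. $H=\bigoplus_{i\in\mathbb Z}H_i$, each $H_i$ a copy of $P$, elements finitely supported sequences $(h_i)_{i\in\mathbb Z}$; $(h)_j$ denotes the element with $h$ at coordinate $j$ and $1$ elsewhere. $\alpha((h_i)_i)=(h_{i+1})_i$. $\bar h\in H$ is a $[\pm,t]$-commutator if $\bar h=\bar g_1\alpha(\bar g_1^{-1})\alpha(\bar g_2)\bar g_2^{-1}$ or $\bar h=\alpha(\bar g_1)\bar g_1^{-1}\bar g_2\alpha(\bar g_2^{-1})$ for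 some $\bar g_1,\bar g_2\in H$. *)

theory Defs
  imports "HOL-Algebra.Group"
begin

definition Xi :: "('a, 'b) monoid_scheme \<Rightarrow> 'a \<Rightarrow> 'a \<Rightarrow> 'a \<Rightarrow> bool" where
  "Xi G u1 u2 u3 \<longleftrightarrow> (\<exists>x\<in>carrier G. \<exists>y\<in>carrier G.
     u3 = inv\<^bsub>G\<^esub> x \<otimes>\<^bsub>G\<^esub> inv\<^bsub>G\<^esub> u2 \<otimes>\<^bsub>G\<^esub> x \<otimes>\<^bsub>G\<^esub> inv\<^bsub>G\<^esub> y \<otimes>\<^bsub>G\<^esub> inv\<^bsub>G\<^esub> u1 \<otimes>\<^bsub>G\<^esub> y)"

definition S1 :: "('a, 'b) monoid_scheme \<Rightarrow> bool" where
  "S1 G \<longleftrightarrow> (\<forall>a1\<in>carrier G. \<forall>a2\<in>carrier G. \<exists>x\<in>carrier G. \<exists>y\<in>carrier G.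
     a2 = inv\<^bsub>G\<^esub> x \<otimes>\<^bsub>G\<^esub> inv\<^bsub>G\<^esub> a1 \<otimes>\<^bsub>G\<^esub> y \<otimes>\<^bsub>G\<^esub> x \<otimes>\<^bsub>G\<^esub> inv\<^bsub>G\<^esub> y)"

definition S2 :: "('a, 'b) monoid_scheme \<Rightarrow> bool" where
  "S2 G \<longleftrightarrow> (\<forall>a1\<in>carrier G. \<forall>a2\<in>carrier G. \<forall>a3\<in>carrier G. \<exists>u\<in>carrier G. \<exists>v\<in>carrier G.
     a2 = a3 \<otimes>\<^bsub>G\<^esub> u \<otimes>\<^bsub>G\<^esub> inv\<^bsub>G\<^esub> a1 \<otimes>\<^bsub>G\<^esub> inv\<^bsub>G\<^esub> a3 \<otimes>\<^bsub>G\<^esub> v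
          \<otimes>\<^bsub>G\<^esub> inv\<^bsub>G\<^esub> u \<otimes>\<^bsub>G\<^esub> inv\<^bsub>G\<^esub> v)"

definition S3 :: "('a, 'b) monoid_scheme \<Rightarrow> bool" where
  "S3 G \<longleftrightarrow> (\<forall>u1\<in>carrier G. \<forall>u2\<in>carrier G. \<forall>u3\<in>carrier G. \<forall>u4\<in>carrier G.
     u1 \<noteq> \<one>\<^bsub>G\<^esub> \<longrightarrow> u2 \<noteq> \<one>\<^bsub>G\<^esub> \<longrightarrow> u3 \<noteq> \<one>\<^bsub>G\<^esub> \<longrightarrow> u4 \<noteq> \<one>\<^bsub>G\<^esub> \<longrightarrow>
     (\<exists>x\<in>carrier G. \<exists>y\<in>carrier G. \<exists>z\<in>carrier G.
        u4 = inv\<^bsub>G\<^esub> x \<otimes>\<^bsub>G\<^esub> u1 \<otimes>\<^bsub>G\<^esub> x \<otimes>\<^bsub>G\<^esub> inv\<^bsub>G\<^esub> y \<otimes>\<^bsub>G\<^esub> u2 \<otimes>\<^bsub>G\<^esub> y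
             \<otimes>\<^bsub>G\<^esub> inv\<^bsub>G\<^esub> z \<otimes>\<^bsub>G\<^esub> u3 \<otimes>\<^bsub>G\<^esub> z))"

definition S4 :: "('a, 'b) monoid_scheme \<Rightarrow> bool" where
  "S4 G \<longleftrightarrow> (\<exists>u1\<in>carrier G. \<exists>u2\<in>carrier G. \<exists>u3\<in>carrier G.
     u1 \<noteq> \<one>\<^bsub>G\<^esub> \<and> u2 \<noteq> \<one>\<^bsub>G\<^esub> \<and> u3 \<noteq> \<one>\<^bsub>G\<^esub> \<and> \<not> Xi G u1 u2 u3)"

text \<open>The restricted direct sum H of copies of P indexed by the integers:
  finitely supported sequences, with pointwise operations.\<close>

definition Hcarrier :: "('a, 'b) monoid_scheme \<Rightarrow> (int \<Rightarrow> 'a) set" where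
  "Hcarrier G = {h. (\<forall>i. h i \<in> carrier G) \<and> finite {i. h i \<noteq> \<one>\<^bsub>G\<^esub>}}"

definition Hmul :: "('a, 'b) monoid_scheme \<Rightarrow> (int \<Rightarrow> 'a) \<Rightarrow> (int \<Rightarrow> 'a) \<Rightarrow> (int \<Rightarrow> 'a)" where
  "Hmul G g h = (\<lambda>i. g i \<otimes>\<^bsub>G\<^esub> h i)"

definition Hinv :: "('a, 'b) monoid_scheme \<Rightarrow> (int \<Rightarrow> 'a) \<Rightarrow> (int \<Rightarrow> 'a)" where
  "Hinv G g = (\<lambda>i. inv\<^bsub>G\<^esub> (g i))"

definition shift :: "(int \<Rightarrow> 'a) \<Rightarrow> (int \<Rightarrow> 'a)" where
  "shift h = (\<lambda>i. h (i + 1))"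

definition pm_t_commutator :: "('a, 'b) monoid_scheme \<Rightarrow> (int \<Rightarrow> 'a) \<Rightarrow> bool" where
  "pm_t_commutator G h \<longleftrightarrow> (\<exists>g1\<in>Hcarrier G. \<exists>g2\<in>Hcarrier G.
     h = Hmul G (Hmul G (Hmul G g1 (shift (Hinv G g1))) (shift g2)) (Hinv G g2)
   \<or> h = Hmul G (Hmul G (Hmul G (shift g1) (Hinv G g1)) g2) (shift (Hinv G g2)))"

definition elem3 :: "('a, 'b) monoid_scheme \<Rightarrow> 'a \<Rightarrow> 'a \<Rightarrow> 'a \<Rightarrow> (int \<Rightarrow> 'a)" where
  "elem3 G h1 h2 h3 = (\<lambda>i. if i = 1 then h1 else if i = 2 then h2 else if i = 3 then h3 else \<one>\<^bsub>G\<^esub>)"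

end

theory Submission
  imports Defs
begin

context group
begin

lemma cancel_rl [simp]: "x \<in> carrier G \<Longrightarrow> y \<in> carrier G \<Longrightarrow> x \<otimes> (inv x \<otimes> y) = y"
  by (simp add: m_assoc[symmetric])
lemma cancel_lr [simp]: "x \<in> carrier G \<Longrightarrow> y \<in> carrier G \<Longrightarrow> inv x \<otimes> (x \<otimes> y) = y"
  by (simp add: m_assoc[symmetric])

lemmas nf = m_assoc inv_mult_group

end

lemma prop_left:
  fixes f :: "int \<Rightarrow> 'a"
  assumes "finite {i. f i \<noteq> c}" and "\<And>i. i \<le> 0 \<Longrightarrow> f (i+1) = f i"
  shows "f 1 = c"
proof -
  have "\<not> {..0::int} \<subseteq> {i. f i \<noteq> c}"
    using assms(1) finite_subset infinite_Iic by blast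
  then obtain N where N: "N \<le> 0" "f N = c" by auto
  have "\<forall>k::nat. N + int k \<le> 1 \<longrightarrow> f (N + int k) = c"
  proof
    fix k show "N + int k \<le> 1 \<longrightarrow> f (N + int k) = c"
    proof (induction k)
      case 0 thus ?case using N by simp
    next
      case (Suc k)
      show ?case
      proof
        assume h: "N + int (Suc k) \<le> 1"
        have "f (N + int (Suc k)) = f ((N + int k) + 1)" by (simp add: algebra_simps)
        also have "\<dots> = f (N + int k)" using assms(2) h by simp
        finally show "f (N + int (Suc k)) = c" using Suc h by simp
      qed
    qed
  qed
  from this[rule_format, of "nat (1 - N)"] N show ?thesis by simp
qed

lemma prop_right:
  fixes f :: "int \<Rightarrow> 'a"
  assumes "finite {i. f i \<noteq> c}" and "\<And>i. i \<ge> 4 \<Longrightarrow> f (i+1) = f i"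
  shows "f 4 = c"
proof -
  have "\<not> {4::int..} \<subseteq> {i. f i \<noteq> c}"
    using assms(1) finite_subset infinite_Ici by blast
  then obtain N where N: "N \<ge> 4" "f N = c" by auto
  have "\<forall>k::nat. N - int k \<ge> 4 \<longrightarrow> f (N - int k) = c"
  proof
    fix k show "N - int k \<ge> 4 \<longrightarrow> f (N - int k) = c"
    proof (induction k)
      case 0 thus ?case using N by simp
    next
      case (Suc k)
      show ?case
      proof
        assume h: "N - int (Suc k) \<ge> 4"
        have "f (N - int k) = f ((N - int (Suc k)) + 1)" by (simp add: algebra_simps)
        also have "\<dots> = f (N - int (Suc k))" using assms(2)[of "N - int (Suc k)"] h by simp
        finally show "f (N - int (Suc k)) = c" using Suc h by simp
      qed
    qed
  qed
  from this[rule_format, of "nat (N - 4)"] N show ?thesis by simp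
qed


lemma (in group) Hcarrier_supp:
  assumes "a \<in> Hcarrier G" "b \<in> Hcarrier G"
  shows "finite {i. inv (a i) \<otimes> b i \<noteq> \<one>}"
proof -
  have "{i. inv (a i) \<otimes> b i \<noteq> \<one>} \<subseteq> {i. a i \<noteq> \<one>} \<union> {i. b i \<noteq> \<one>}"
  proof
    fix i assume "i \<in> {i. inv (a i) \<otimes> b i \<noteq> \<one>}"
    thus "i \<in> {i. a i \<noteq> \<one>} \<union> {i. b i \<noteq> \<one>}" by auto
  qed
  moreover have "finite ({i. a i \<noteq> \<one>} \<union> {i. b i \<noteq> \<one>})"
    using assms unfolding Hcarrier_def by simp
  ultimately show ?thesis by (rule finite_subset)
qed

lemma (in group) form1:
  assumes "a \<in> Hcarrier G" "b \<in> Hcarrier G"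
    and h: "h1 \<in> carrier G" "h2 \<in> carrier G" "h3 \<in> carrier G"
    and E: "\<And>i. elem3 G h1 h2 h3 i = a i \<otimes>\<^bsub>G\<^esub> inv\<^bsub>G\<^esub> (a (i+1)) \<otimes>\<^bsub>G\<^esub> b (i+1) \<otimes>\<^bsub>G\<^esub> inv\<^bsub>G\<^esub> (b i)"
  shows "Xi G h1 h2 h3"
proof -
  have aC: "\<And>i. a i \<in> carrier G" and bC: "\<And>i. b i \<in> carrier G"
    using assms(1,2) unfolding Hcarrier_def by auto
  define d where "d i = inv (a i) \<otimes> b i" for i
  have fin: "finite {i. d i \<noteq> \<one>}" unfolding d_def using Hcarrier_supp assms(1,2) by blast
  have step: "d (i+1) = d i" if "i \<noteq> 1" "i \<noteq> 2" "i \<noteq> 3" for i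
  proof -
    have e: "a i \<otimes> inv (a (i+1)) \<otimes> b (i+1) \<otimes> inv (b i) = \<one>"
      using E[of i] that by (simp add: elem3_def)
    have "d (i+1) = inv (a i) \<otimes> (a i \<otimes> inv (a (i+1)) \<otimes> b (i+1) \<otimes> inv (b i)) \<otimes> b i"
      unfolding d_def using aC bC by (simp add: nf)
    also have "\<dots> = d i" unfolding e d_def using aC bC by simp
    finally show ?thesis .
  qed
  have d1: "d 1 = \<one>" by (rule prop_left[OF fin]) (auto intro: step)
  have d4: "d 4 = \<one>" by (rule prop_right[OF fin]) (auto intro: step)
  have b1: "b 1 = a 1"
  proof -
    have "b 1 = a 1 \<otimes> d 1" unfolding d_def using aC bC by (simp add: nf)
    thus ?thesis using d1 aC by simp
  qed
  have b4: "b 4 = a 4"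
  proof -
    have "b 4 = a 4 \<otimes> d 4" unfolding d_def using aC bC by (simp add: nf)
    thus ?thesis using d4 aC by simp
  qed
  have e1: "h1 = a 1 \<otimes> inv (a 2) \<otimes> b 2 \<otimes> inv (a 1)"
    using E[of 1] b1 by (simp add: elem3_def)
  have e2: "h2 = a 2 \<otimes> inv (a 3) \<otimes> b 3 \<otimes> inv (b 2)"
    using E[of 2] by (simp add: elem3_def)
  have e3: "h3 = a 3 \<otimes> inv (a 4) \<otimes> a 4 \<otimes> inv (b 3)"
    using E[of 3] b4 by (simp add: elem3_def)
  show ?thesis unfolding Xi_def
  proof (intro bexI)
    show "h3 = inv (b 2 \<otimes> inv (a 3)) \<otimes> inv h2 \<otimes> (b 2 \<otimes> inv (a 3)) \<otimes> inv (a 1 \<otimes> inv (a 3))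
       \<otimes> inv h1 \<otimes> (a 1 \<otimes> inv (a 3))"
      unfolding e1 e2 e3 using aC bC by (simp add: nf)
  qed (use aC bC in auto)
qed

lemma (in group) form2:
  assumes "a \<in> Hcarrier G" "b \<in> Hcarrier G"
    and h: "h1 \<in> carrier G" "h2 \<in> carrier G" "h3 \<in> carrier G"
    and E: "\<And>i. elem3 G h1 h2 h3 i = a (i+1) \<otimes>\<^bsub>G\<^esub> inv\<^bsub>G\<^esub> (a i) \<otimes>\<^bsub>G\<^esub> b i \<otimes>\<^bsub>G\<^esub> inv\<^bsub>G\<^esub> (b (i+1))"
  shows "Xi G h1 h2 h3"
proof -
  have aC: "\<And>i. a i \<in> carrier G" and bC: "\<And>i. b i \<in> carrier G"
    using assms(1,2) unfolding Hcarrier_def by auto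
  define d where "d i = inv (a i) \<otimes> b i" for i
  have fin: "finite {i. d i \<noteq> \<one>}" unfolding d_def using Hcarrier_supp assms(1,2) by blast
  have step: "d (i+1) = d i" if "i \<noteq> 1" "i \<noteq> 2" "i \<noteq> 3" for i
  proof -
    have e: "a (i+1) \<otimes> inv (a i) \<otimes> b i \<otimes> inv (b (i+1)) = \<one>"
      using E[of i] that by (simp add: elem3_def)
    have "d i = inv (a (i+1)) \<otimes> (a (i+1) \<otimes> inv (a i) \<otimes> b i \<otimes> inv (b (i+1))) \<otimes> b (i+1)"
      unfolding d_def using aC bC by (simp add: nf)
    also have "\<dots> = d (i+1)" unfolding e d_def using aC bC by simp
    finally show ?thesis by (rule sym)
  qed
  have d1: "d 1 = \<one>" by (rule prop_left[OF fin]) (auto intro: step)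
  have d4: "d 4 = \<one>" by (rule prop_right[OF fin]) (auto intro: step)
  have b1: "b 1 = a 1"
  proof -
    have "b 1 = a 1 \<otimes> d 1" unfolding d_def using aC bC by (simp add: nf)
    thus ?thesis using d1 aC by simp
  qed
  have b4: "b 4 = a 4"
  proof -
    have "b 4 = a 4 \<otimes> d 4" unfolding d_def using aC bC by (simp add: nf)
    thus ?thesis using d4 aC by simp
  qed
  have e1: "h1 = a 2 \<otimes> inv (a 1) \<otimes> a 1 \<otimes> inv (b 2)"
    using E[of 1] b1 by (simp add: elem3_def)
  have e2: "h2 = a 3 \<otimes> inv (a 2) \<otimes> b 2 \<otimes> inv (b 3)"
    using E[of 2] by (simp add: elem3_def)
  have e3: "h3 = a 4 \<otimes> inv (a 3) \<otimes> b 3 \<otimes> inv (a 4)"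
    using E[of 3] b4 by (simp add: elem3_def)
  show ?thesis unfolding Xi_def
  proof (intro bexI)
    show "h3 = inv (a 3 \<otimes> inv (a 4)) \<otimes> inv h2 \<otimes> (a 3 \<otimes> inv (a 4)) \<otimes> inv (a 2 \<otimes> inv (a 4))
       \<otimes> inv h1 \<otimes> (a 2 \<otimes> inv (a 4))"
      unfolding e1 e2 e3 using aC bC by (simp add: nf)
  qed (use aC bC in auto)
qed


lemma (in group) backward:
  assumes h: "h1 \<in> carrier G" "h2 \<in> carrier G" "h3 \<in> carrier G"
    and X: "Xi G h1 h2 h3"
  shows "pm_t_commutator G (elem3 G h1 h2 h3)"
proof -
  obtain x y where xy: "x \<in> carrier G" "y \<in> carrier G"
    and eq: "h3 = inv x \<otimes> inv h2 \<otimes> x \<otimes> inv y \<otimes> inv h1 \<otimes> y"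
    using X unfolding Xi_def by blast
  define a :: "int \<Rightarrow> 'a" where "a i = (if i = 2 then y \<otimes> inv x else if i = 4 then inv x else \<one>)" for i
  define b :: "int \<Rightarrow> 'a" where "b i = (if i = 2 then inv h1 \<otimes> y \<otimes> inv x else if i = 3 then x \<otimes> h3 \<otimes> inv x
     else if i = 4 then inv x else \<one>)" for i
  have aH: "a \<in> Hcarrier G"
  proof -
    have "{i. a i \<noteq> \<one>} \<subseteq> {2,4}" unfolding a_def by auto
    hence "finite {i. a i \<noteq> \<one>}" by (rule finite_subset) simp
    moreover have "\<forall>i. a i \<in> carrier G" unfolding a_def using xy by auto
    ultimately show ?thesis unfolding Hcarrier_def by simp
  qed
  have bH: "b \<in> Hcarrier G"
  proof -
    have "{i. b i \<noteq> \<one>} \<subseteq> {2,3,4}" unfolding b_def by auto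
    hence "finite {i. b i \<noteq> \<one>}" by (rule finite_subset) simp
    moreover have "\<forall>i. b i \<in> carrier G" unfolding b_def using xy h by auto
    ultimately show ?thesis unfolding Hcarrier_def by simp
  qed
  have "elem3 G h1 h2 h3 = Hmul G (Hmul G (Hmul G (shift a) (Hinv G a)) b) (shift (Hinv G b))"
  proof
    fix i
    show "elem3 G h1 h2 h3 i = Hmul G (Hmul G (Hmul G (shift a) (Hinv G a)) b) (shift (Hinv G b)) i"
    proof -
      consider "i = 1" | "i = 2" | "i = 3" | "i = 4" | "i \<noteq> 1 \<and> i \<noteq> 2 \<and> i \<noteq> 3 \<and> i \<noteq> 4" by blast
      thus ?thesis
      proof cases
        case 1 thus ?thesis unfolding Hmul_def Hinv_def shift_def elem3_def a_def b_def
          using xy h by (simp add: nf)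
      next
        case 2 thus ?thesis unfolding Hmul_def Hinv_def shift_def elem3_def a_def b_def
          using xy h by (simp add: nf eq)
      next
        case 3 thus ?thesis unfolding Hmul_def Hinv_def shift_def elem3_def a_def b_def
          using xy h by (simp add: nf)
      next
        case 4 thus ?thesis unfolding Hmul_def Hinv_def shift_def elem3_def a_def b_def
          using xy h by (simp add: nf)
      next
        case 5
        hence "i + 1 \<noteq> 2" "i + 1 \<noteq> 3" "i + 1 \<noteq> 4" by auto
        thus ?thesis using 5 unfolding Hmul_def Hinv_def shift_def elem3_def a_def b_def
          by simp
      qed
    qed
  qed
  thus ?thesis unfolding pm_t_commutator_def using aH bH by blast
qed

theorem lemma4p5:
  fixes G :: "('a, 'b) monoid_scheme"
  assumes "group G" and "finite (carrier G)"
    and "S1 G" and "S2 G" and "S3 G" and "S4 G"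
    and "h1 \<in> carrier G" and "h2 \<in> carrier G" and "h3 \<in> carrier G"
    and "h1 \<noteq> \<one>\<^bsub>G\<^esub>" and "h2 \<noteq> \<one>\<^bsub>G\<^esub>" and "h3 \<noteq> \<one>\<^bsub>G\<^esub>"
  shows "pm_t_commutator G (elem3 G h1 h2 h3) \<longleftrightarrow> Xi G h1 h2 h3"
proof
  interpret group G by fact
  assume "pm_t_commutator G (elem3 G h1 h2 h3)"
  then obtain g1 g2 where g: "g1 \<in> Hcarrier G" "g2 \<in> Hcarrier G"
    and D: "elem3 G h1 h2 h3 = Hmul G (Hmul G (Hmul G g1 (shift (Hinv G g1))) (shift g2)) (Hinv G g2)
   \<or> elem3 G h1 h2 h3 = Hmul G (Hmul G (Hmul G (shift g1) (Hinv G g1)) g2) (shift (Hinv G g2))"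
    unfolding pm_t_commutator_def by blast
  from D show "Xi G h1 h2 h3"
  proof
    assume e: "elem3 G h1 h2 h3 = Hmul G (Hmul G (Hmul G g1 (shift (Hinv G g1))) (shift g2)) (Hinv G g2)"
    show ?thesis
    proof (rule form1[OF g assms(7-9)])
      fix i show "elem3 G h1 h2 h3 i = g1 i \<otimes>\<^bsub>G\<^esub> inv\<^bsub>G\<^esub> (g1 (i+1)) \<otimes>\<^bsub>G\<^esub> g2 (i+1) \<otimes>\<^bsub>G\<^esub> inv\<^bsub>G\<^esub> (g2 i)"
        using fun_cong[OF e, of i] unfolding Hmul_def Hinv_def shift_def by simp
    qed
  next
    assume e: "elem3 G h1 h2 h3 = Hmul G (Hmul G (Hmul G (shift g1) (Hinv G g1)) g2) (shift (Hinv G g2))"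
    show ?thesis
    proof (rule form2[OF g assms(7-9)])
      fix i show "elem3 G h1 h2 h3 i = g1 (i+1) \<otimes>\<^bsub>G\<^esub> inv\<^bsub>G\<^esub> (g1 i) \<otimes>\<^bsub>G\<^esub> g2 i \<otimes>\<^bsub>G\<^esub> inv\<^bsub>G\<^esub> (g2 (i+1))"
        using fun_cong[OF e, of i] unfolding Hmul_def Hinv_def shift_def by simp
    qed
  qed
next
  assume "Xi G h1 h2 h3"
  thus "pm_t_commutator G (elem3 G h1 h2 h3)"
    using group.backward[OF assms(1) assms(7-9)] by blast
qed

end
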